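(* Let $N,k$ be positive integers, $p_1,\dots,p_N$ primes with all $p_i>2$, and $s_1,\dots,s_N$ positive integers. Then the group $\mathbb{Z}_{p_1^{s_1}\cdots p_N^{s_N}}\mathbin{\mathrm{wr}}\mathbb{Z}^{2k}$ admits an automorphism with finite Reidemeister number.
   Context: $\mathbb{Z}_q\mathbin{\mathrm{wr}}\mathbb{Z}^d=\bigoplus_{x\in\mathbb{Z}^d}(\mathbb{Z}_q)_x\rtimes\mathbb{Z}^d$ is the restricted wreath product with $\mathbb{Z}^d$ acting by shifting indices. The Reidemeister number $R(\varphi)$ of an automorphism $\varphi$ of a group $G$ is the number of equivalence classes of the relation $g_1\sim hg_2\varphi(h^{-1})$, $h\in G$. *)

theory Defs
  imports "HOL-Algebra.Algebra"
begin

text \<open>The lattice Z^d, represented as integer vectors indexed by nat that vanish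
  from index d onwards.\<close>
definition Zvec :: "nat \<Rightarrow> (nat \<Rightarrow> int) set" where
  "Zvec d = {v. \<forall>i\<ge>d. v i = 0}"

definition lamps :: "nat \<Rightarrow> nat \<Rightarrow> ((nat \<Rightarrow> int) \<Rightarrow> int) set" where
  "lamps q d = {f. (\<forall>x. f x \<in> {0..<int q}) \<and> (\<forall>x. x \<notin> Zvec d \<longrightarrow> f x = 0)
                   \<and> finite {x. f x \<noteq> 0}}"

text \<open>Restricted wreath product Z_q wr Z^d = (direct sum of copies of Z_q over Z^d)
  semidirect Z^d, with Z^d acting by shifting indices:
  (f,v)(g,w) = (f + g(. - v), v + w).\<close>
definition wreath :: "nat \<Rightarrow> nat \<Rightarrow> (((nat \<Rightarrow> int) \<Rightarrow> int) \<times> (nat \<Rightarrow> int)) monoid" where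
  "wreath q d = \<lparr> carrier = lamps q d \<times> Zvec d,
     monoid.mult = (\<lambda>(f, v) (g, w). ((\<lambda>x. (f x + g (\<lambda>i. x i - v i)) mod int q), (\<lambda>i. v i + w i))),
     one = ((\<lambda>x. 0), (\<lambda>i. 0)) \<rparr>"

definition twisted_conj :: "('a, 'b) monoid_scheme \<Rightarrow> ('a \<Rightarrow> 'a) \<Rightarrow> ('a \<times> 'a) set" where
  "twisted_conj G \<phi> = {(g1, g2). g1 \<in> carrier G \<and> g2 \<in> carrier G \<and>
      (\<exists>h\<in>carrier G. g1 = h \<otimes>\<^bsub>G\<^esub> g2 \<otimes>\<^bsub>G\<^esub> \<phi> (inv\<^bsub>G\<^esub> h))}"

definition reidemeister_classes :: "('a, 'b) monoid_scheme \<Rightarrow> ('a \<Rightarrow> 'a) \<Rightarrow> 'a set set" where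
  "reidemeister_classes G \<phi> = carrier G // twisted_conj G \<phi>"

end

theory Submission
  imports Defs "HOL-Computational_Algebra.Primes"
begin

definition Mm :: "(nat \<Rightarrow> int) \<Rightarrow> (nat \<Rightarrow> int)" where
  "Mm v = (\<lambda>i. if even i then - v (Suc i) else v (i - 1) - v i)"

lemma Mm3: "Mm (Mm (Mm v)) = v"
  by (rule ext) (auto simp: Mm_def)

lemma Mm_diff: "Mm (\<lambda>i. a i - b i) = (\<lambda>i. Mm a i - Mm b i)"
  by (rule ext) (auto simp: Mm_def)

lemma Mm_Zvec: assumes "even d" "v \<in> Zvec d" shows "Mm v \<in> Zvec d"
  using assms unfolding Zvec_def Mm_def
  by (auto, metis One_nat_def Suc_pred add_leD2 dvd_imp_le even_Suc le_SucE le_eq_less_or_eq odd_pos plus_1_eq_Suc)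

lemma Mm_nZvec: assumes "even d" "x \<notin> Zvec d" shows "Mm x \<notin> Zvec d"
proof -
  have "Mm x \<in> Zvec d \<Longrightarrow> x \<in> Zvec d"
  proof -
    assume "Mm x \<in> Zvec d"
    then have "Mm (Mm (Mm x)) \<in> Zvec d" by (meson Mm_Zvec assms(1))
    then show "x \<in> Zvec d" by (simp add: Mm3)
  qed
  then show ?thesis using assms(2) by blast
qed

lemma finite_supp_comp:
  assumes "finite {y. f y \<noteq> (0::int)}" "\<And>x. F (G x) = x"
  shows "finite {x. f (G x) \<noteq> 0}"
proof -
  have "{x. f (G x) \<noteq> 0} \<subseteq> F ` {y. f y \<noteq> 0}"
  proof
    fix x assume "x \<in> {x. f (G x) \<noteq> 0}"
    then have "G x \<in> {y. f y \<noteq> 0}" by simp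
    then show "x \<in> F ` {y. f y \<noteq> 0}" using assms(2)[of x] by (metis image_eqI)
  qed
  then show ?thesis using assms(1) finite_subset by blast
qed

lemma Zvec_diff: "v \<in> Zvec d \<Longrightarrow> w \<in> Zvec d \<Longrightarrow> (\<lambda>i. v i - w i) \<in> Zvec d"
  and Zvec_add: "v \<in> Zvec d \<Longrightarrow> w \<in> Zvec d \<Longrightarrow> (\<lambda>i. v i + w i) \<in> Zvec d"
  and Zvec_uminus: "v \<in> Zvec d \<Longrightarrow> (\<lambda>i. - v i) \<in> Zvec d"
  by (auto simp: Zvec_def)

lemma nZvec_diff: "x \<notin> Zvec d \<Longrightarrow> w \<in> Zvec d \<Longrightarrow> (\<lambda>i. x i - w i) \<notin> Zvec d"
  and nZvec_add: "x \<notin> Zvec d \<Longrightarrow> w \<in> Zvec d \<Longrightarrow> (\<lambda>i. x i + w i) \<notin> Zvec d"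
  by (auto simp: Zvec_def)

lemma wreath_mult: "(f, v) \<otimes>\<^bsub>wreath q d\<^esub> (g, w) = ((\<lambda>x. (f x + g (\<lambda>i. x i - v i)) mod int q), (\<lambda>i. v i + w i))"
  by (simp add: wreath_def)

lemma wreath_one: "\<one>\<^bsub>wreath q d\<^esub> = ((\<lambda>x. 0), (\<lambda>i. 0))"
  by (simp add: wreath_def)

lemma wreath_carrier: "carrier (wreath q d) = lamps q d \<times> Zvec d"
  by (simp add: wreath_def)

lemma lamps_mod: "f \<in> lamps q d \<Longrightarrow> f x mod int q = f x"
  by (simp add: lamps_def)

lemma wreath_group: assumes "q > 0" shows "group (wreath q d)"
proof (rule groupI)
  fix x y assume x: "x \<in> carrier (wreath q d)" and y: "y \<in> carrier (wreath q d)"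
  obtain f v where [simp]: "x = (f, v)" by force
  obtain g w where [simp]: "y = (g, w)" by force
  have f: "f \<in> lamps q d" "v \<in> Zvec d" and g: "g \<in> lamps q d" "w \<in> Zvec d"
    using x y by (auto simp: wreath_carrier)
  have "{x. (f x + g (\<lambda>i. x i - v i)) mod int q \<noteq> 0} \<subseteq> {x. f x \<noteq> 0} \<union> {x. g (\<lambda>i. x i - v i) \<noteq> 0}"
    by auto
  moreover have "finite {x. g (\<lambda>i. x i - v i) \<noteq> 0}"
    by (rule finite_supp_comp[where F="\<lambda>y i. y i + v i"]) (use g in \<open>auto simp: lamps_def\<close>)
  ultimately have "finite {x. (f x + g (\<lambda>i. x i - v i)) mod int q \<noteq> 0}"
    using f by (auto simp: lamps_def intro: finite_subset)
  then show "x \<otimes>\<^bsub>wreath q d\<^esub> y \<in> carrier (wreath q d)"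
    using f g assms nZvec_diff[of _ d v] by (auto simp: wreath_mult wreath_carrier lamps_def Zvec_add)
next
  show "\<one>\<^bsub>wreath q d\<^esub> \<in> carrier (wreath q d)"
    by (auto simp: wreath_one wreath_carrier lamps_def Zvec_def assms)
next
  fix x y z assume x: "x \<in> carrier (wreath q d)" and y: "y \<in> carrier (wreath q d)"
    and z: "z \<in> carrier (wreath q d)"
  obtain f v where [simp]: "x = (f, v)" by force
  obtain g w where [simp]: "y = (g, w)" by force
  obtain h u where [simp]: "z = (h, u)" by force
  have e: "(\<lambda>i. x i - (v i + w i)) = (\<lambda>i. (x i - v i) - w i)" for x :: "nat \<Rightarrow> int"
    by (rule ext) simp
  show "x \<otimes>\<^bsub>wreath q d\<^esub> y \<otimes>\<^bsub>wreath q d\<^esub> z = x \<otimes>\<^bsub>wreath q d\<^esub> (y \<otimes>\<^bsub>wreath q d\<^esub> z)"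
    by (simp add: wreath_mult e mod_add_eq add.assoc mod_add_right_eq)
      (metis (no_types) mod_add_left_eq mod_add_right_eq add.assoc)
next
  fix x assume x: "x \<in> carrier (wreath q d)"
  obtain f v where [simp]: "x = (f, v)" by force
  have f: "f \<in> lamps q d" "v \<in> Zvec d" using x by (auto simp: wreath_carrier)
  show "\<one>\<^bsub>wreath q d\<^esub> \<otimes>\<^bsub>wreath q d\<^esub> x = x"
    using f by (simp add: wreath_mult wreath_one lamps_mod)
next
  fix x assume x: "x \<in> carrier (wreath q d)"
  obtain f v where [simp]: "x = (f, v)" by force
  have f: "f \<in> lamps q d" "v \<in> Zvec d" using x by (auto simp: wreath_carrier)
  let ?y = "((\<lambda>x. (- f (\<lambda>i. x i + v i)) mod int q), (\<lambda>i. - v i))"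
  have "finite {x. f (\<lambda>i. x i + v i) \<noteq> 0}"
    by (rule finite_supp_comp[where F="\<lambda>y i. y i - v i"]) (use f in \<open>auto simp: lamps_def\<close>)
  then have "finite {x. (- f (\<lambda>i. x i + v i)) mod int q \<noteq> 0}"
    by (rule rev_finite_subset) auto
  then have "?y \<in> carrier (wreath q d)"
    using f assms nZvec_add[of _ d v] by (auto simp: wreath_carrier lamps_def Zvec_uminus)
  moreover have "?y \<otimes>\<^bsub>wreath q d\<^esub> x = \<one>\<^bsub>wreath q d\<^esub>"
    by (simp add: wreath_mult wreath_one) (simp add: mod_add_left_eq)
  ultimately show "\<exists>y\<in>carrier (wreath q d). y \<otimes>\<^bsub>wreath q d\<^esub> x = \<one>\<^bsub>wreath q d\<^esub>" by blast
qed


definition phi :: "nat \<Rightarrow> (((nat \<Rightarrow> int) \<Rightarrow> int) \<times> (nat \<Rightarrow> int)) \<Rightarrow> (((nat \<Rightarrow> int) \<Rightarrow> int) \<times> (nat \<Rightarrow> int))" where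
  "phi q = (\<lambda>(f, v). ((\<lambda>x. (- f (Mm (Mm x))) mod int q), Mm v))"

definition psi :: "nat \<Rightarrow> (((nat \<Rightarrow> int) \<Rightarrow> int) \<times> (nat \<Rightarrow> int)) \<Rightarrow> (((nat \<Rightarrow> int) \<Rightarrow> int) \<times> (nat \<Rightarrow> int))" where
  "psi q = (\<lambda>(f, v). ((\<lambda>x. (- f (Mm x)) mod int q), Mm (Mm v)))"

lemma Mm_add: "Mm (\<lambda>i. a i + b i) = (\<lambda>i. Mm a i + Mm b i)"
  by (rule ext) (auto simp: Mm_def)

lemma lamps_comp:
  assumes "q > 0" "even d" "f \<in> lamps q d" "\<And>x. F (G x) = x"
    and "\<And>x. x \<notin> Zvec d \<Longrightarrow> G x \<notin> Zvec d"
  shows "(\<lambda>x. (- f (G x)) mod int q) \<in> lamps q d"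
proof -
  have "finite {x. f (G x) \<noteq> 0}"
    by (rule finite_supp_comp[where F=F]) (use assms in \<open>auto simp: lamps_def\<close>)
  then have "finite {x. (- f (G x)) mod int q \<noteq> 0}"
    by (rule rev_finite_subset) auto
  then show ?thesis using assms by (auto simp: lamps_def)
qed

lemma nZvec_MmMm: "even d \<Longrightarrow> x \<notin> Zvec d \<Longrightarrow> Mm (Mm x) \<notin> Zvec d"
  by (simp add: Mm_nZvec)

lemma phi_carrier: assumes "q > 0" "even d" "g \<in> carrier (wreath q d)"
  shows "phi q g \<in> carrier (wreath q d)"
proof -
  obtain f v where [simp]: "g = (f, v)" by force
  have f: "f \<in> lamps q d" "v \<in> Zvec d" using assms by (auto simp: wreath_carrier)
  show ?thesis
    using lamps_comp[OF assms(1,2) f(1), of Mm "\<lambda>x. Mm (Mm x)"] f(2) assms(2)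
    by (auto simp: phi_def wreath_carrier Mm3 Mm_Zvec nZvec_MmMm)
qed

lemma psi_carrier: assumes "q > 0" "even d" "g \<in> carrier (wreath q d)"
  shows "psi q g \<in> carrier (wreath q d)"
proof -
  obtain f v where [simp]: "g = (f, v)" by force
  have f: "f \<in> lamps q d" "v \<in> Zvec d" using assms by (auto simp: wreath_carrier)
  show ?thesis
    using lamps_comp[OF assms(1,2) f(1), of "\<lambda>x. Mm (Mm x)" Mm] f(2) assms(2)
    by (auto simp: psi_def wreath_carrier Mm3 Mm_Zvec Mm_nZvec)
qed

lemma phi_psi: assumes "g \<in> carrier (wreath q d)" shows "phi q (psi q g) = g"
proof -
  obtain f v where [simp]: "g = (f, v)" by force
  have f: "f \<in> lamps q d" using assms by (auto simp: wreath_carrier)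
  show ?thesis using f by (auto simp: phi_def psi_def Mm3 mod_minus_eq lamps_mod)
qed

lemma psi_phi: assumes "g \<in> carrier (wreath q d)" shows "psi q (phi q g) = g"
proof -
  obtain f v where [simp]: "g = (f, v)" by force
  have f: "f \<in> lamps q d" using assms by (auto simp: wreath_carrier)
  show ?thesis using f by (auto simp: phi_def psi_def Mm3 mod_minus_eq lamps_mod)
qed

lemma mod_neg_sum: "(- ((a + b) mod (q::int))) mod q = ((- a) mod q + (- b) mod q) mod q"
  by (metis add.inverse_distrib_swap add.commute mod_add_eq mod_minus_eq)

lemma phi_hom: assumes "q > 0" "even d" shows "phi q \<in> hom (wreath q d) (wreath q d)"
proof (rule homI)
  fix g assume "g \<in> carrier (wreath q d)"
  then show "phi q g \<in> carrier (wreath q d)" using phi_carrier assms by blast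
next
  fix x y assume x: "x \<in> carrier (wreath q d)" and y: "y \<in> carrier (wreath q d)"
  obtain f v where [simp]: "x = (f, v)" by force
  obtain g w where [simp]: "y = (g, w)" by force
  have e: "Mm (Mm (\<lambda>i. z i - Mm v i)) = (\<lambda>i. Mm (Mm z) i - v i)" for z
    by (simp add: Mm_diff Mm3)
  show "phi q (x \<otimes>\<^bsub>wreath q d\<^esub> y) = phi q x \<otimes>\<^bsub>wreath q d\<^esub> phi q y"
    by (simp add: phi_def wreath_mult e Mm_add mod_neg_sum)
qed

lemma phi_iso: assumes "q > 0" "even d" shows "phi q \<in> iso (wreath q d) (wreath q d)"
  unfolding iso_def
proof (intro CollectI conjI phi_hom[OF assms])
  show "bij_betw (phi q) (carrier (wreath q d)) (carrier (wreath q d))"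
    by (rule bij_betwI[where g="psi q"]) (auto intro: phi_carrier psi_carrier assms phi_psi psi_phi)
qed


definition r3 :: "(nat \<Rightarrow> int) \<Rightarrow> nat \<Rightarrow> int" where
  "r3 v i = (if even i then (v i + v (Suc i)) mod 3 else 0)"

definition wv :: "(nat \<Rightarrow> int) \<Rightarrow> nat \<Rightarrow> int" where
  "wv v i = (if even i then v i - (v i + v (Suc i)) mod 3 - (v i + v (Suc i)) div 3
             else (v (i - 1) + v i) div 3)"

lemma wv_eq: "(\<lambda>i. v i + Mm (wv v) i) = (\<lambda>i. wv v i + r3 v i)"
proof (rule ext)
  fix i
  show "v i + Mm (wv v) i = wv v i + r3 v i"
  proof (cases "even i")
    case True
    then show ?thesis by (simp add: Mm_def wv_def r3_def)
  next
    case False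
    then have o: "even (i - 1)" "Suc (i - 1) = i" by (auto elim: oddE)
    have s: "v (i - Suc 0) + v i = 3 * ((v (i - Suc 0) + v i) div 3) + (v (i - Suc 0) + v i) mod 3" by simp
    show ?thesis using False o apply (simp add: Mm_def wv_def r3_def) using s by linarith
  qed
qed

lemma wv_Zvec: assumes "even d" "v \<in> Zvec d" shows "wv v \<in> Zvec d"
proof -
  have k: "d \<le> i - 1" if "odd i" "d \<le> i" for i
    using that assms(1) by (cases "i = d") auto
  show ?thesis using assms(2) k unfolding Zvec_def wv_def by auto
qed

lemma r3_V0: assumes "v \<in> Zvec d"
  shows "r3 v \<in> {u. \<forall>x. (x \<in> {..<d} \<longrightarrow> u x \<in> {0..2}) \<and> (x \<notin> {..<d} \<longrightarrow> u x = 0)}"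
  using assms unfolding Zvec_def r3_def by auto

lemma arith2: "2 * c = q + 1 \<Longrightarrow> (a + (- ((c * (b - cc + a)) mod q)) mod q) mod q = (c * (a - b + cc)) mod (q::int)"
proof -
  assume h: "2 * c = q + 1"
  have "(a + (- ((c * (b - cc + a)) mod q)) mod q) mod q = (a - c * (b - cc + a)) mod q"
    by (simp add: mod_add_right_eq mod_minus_eq)
  also have "\<dots> = (c * (a - b + cc)) mod q"
  proof -
    have "a - c * (b - cc + a) - c * (a - b + cc) = q * (- a)"
      using h by (simp add: algebra_simps)
    then have "q dvd (a - c * (b - cc + a) - c * (a - b + cc))" by simp
    then show ?thesis by (subst mod_eq_dvd_iff) assumption
  qed
  finally show ?thesis .
qed


lemma Mm_sum0: "v i + Mm v i + Mm (Mm v) i = 0"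
  by (auto simp: Mm_def)

lemma B3: "Mm (Mm (\<lambda>i. Mm (Mm (\<lambda>i. Mm (Mm (\<lambda>i. x i - v i)) i - v i)) i - v i)) = x"
proof (rule ext)
  fix i
  show "Mm (Mm (\<lambda>i. Mm (Mm (\<lambda>i. Mm (Mm (\<lambda>i. x i - v i)) i - v i)) i - v i)) i = x i"
    using Mm_sum0[of v i] by (simp add: Mm_diff Mm3)
qed


lemma key:
  assumes q: "q > 0" "odd q" and d: "even d" and g: "g \<in> carrier (wreath q d)"
  shows "\<exists>h\<in>carrier (wreath q d). \<exists>u\<in>{u. \<forall>x. (x \<in> {..<d} \<longrightarrow> u x \<in> {0..2}) \<and> (x \<notin> {..<d} \<longrightarrow> u x = 0)}.
           g \<otimes>\<^bsub>wreath q d\<^esub> phi q h = h \<otimes>\<^bsub>wreath q d\<^esub> ((\<lambda>x. 0), u)"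
proof -
  obtain f v where gdef: "g = (f, v)" by force
  have f: "f \<in> lamps q d" "v \<in> Zvec d" using g by (auto simp: wreath_carrier gdef)
  define B where "B x = Mm (Mm (\<lambda>i. x i - v i))" for x
  have B3: "B (B (B x)) = x" for x unfolding B_def by (rule B3)
  have Bn: "B x \<notin> Zvec d" if "x \<notin> Zvec d" for x
    unfolding B_def using that f(2) d by (simp add: Mm_nZvec nZvec_diff)
  define c :: int where "c = (int q + 1) div 2"
  have c: "2 * c = int q + 1" using q(2) unfolding c_def by (auto elim: oddE)
  define e where "e x = (c * (f x - f (B x) + f (B (B x)))) mod int q" for x
  have fin1: "finite {x. f (B x) \<noteq> 0}"
    by (rule finite_supp_comp[where F="\<lambda>x. B (B x)"]) (use f B3 in \<open>auto simp: lamps_def\<close>)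
  have fin2: "finite {x. f (B (B x)) \<noteq> 0}"
    by (rule finite_supp_comp[where F=B]) (use f B3 in \<open>auto simp: lamps_def\<close>)
  have "{x. e x \<noteq> 0} \<subseteq> {x. f x \<noteq> 0} \<union> {x. f (B x) \<noteq> 0} \<union> {x. f (B (B x)) \<noteq> 0}"
    unfolding e_def by auto
  then have "finite {x. e x \<noteq> 0}"
    using fin1 fin2 f(1) by (auto simp: lamps_def intro: finite_subset)
  then have e: "e \<in> lamps q d"
    using q f(1) Bn unfolding lamps_def e_def by auto
  let ?h = "(e, wv v)"
  have hc: "?h \<in> carrier (wreath q d)"
    using e wv_Zvec[OF d f(2)] by (simp add: wreath_carrier)
  have eq1: "(f x + (- e (B x)) mod int q) mod int q = e x" for x
  proof -
    have "(f x + (- e (B x)) mod int q) mod int q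
        = (f x + (- ((c * (f (B x) - f (B (B x)) + f x)) mod int q)) mod int q) mod int q"
      unfolding e_def B3 by simp
    also have "\<dots> = e x" unfolding e_def by (rule arith2[OF c])
    finally show ?thesis .
  qed
  have "g \<otimes>\<^bsub>wreath q d\<^esub> phi q ?h = ?h \<otimes>\<^bsub>wreath q d\<^esub> ((\<lambda>x. 0), r3 v)"
    using eq1 e wv_eq[of v] by (simp add: gdef phi_def wreath_mult B_def[symmetric] lamps_mod)
  then show ?thesis using hc r3_V0[OF f(2)] by blast
qed


lemma twist_of:
  assumes G: "group G" and hom: "\<phi> \<in> hom G G"
    and c: "g \<in> carrier G" "h \<in> carrier G" "g0 \<in> carrier G"
    and eq: "g \<otimes>\<^bsub>G\<^esub> \<phi> h = h \<otimes>\<^bsub>G\<^esub> g0"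
  shows "(g, g0) \<in> twisted_conj G \<phi>"
proof -
  interpret group_hom G G \<phi> using G hom by (simp add: group_hom_def group_hom_axioms_def)
  have ph: "\<phi> h \<in> carrier G" using c by simp
  have "g = g \<otimes>\<^bsub>G\<^esub> \<phi> h \<otimes>\<^bsub>G\<^esub> inv\<^bsub>G\<^esub> (\<phi> h)"
    using c ph by (simp add: G.m_assoc)
  also have "\<dots> = h \<otimes>\<^bsub>G\<^esub> g0 \<otimes>\<^bsub>G\<^esub> \<phi> (inv\<^bsub>G\<^esub> h)"
    using eq c by simp
  finally have calc: "g = h \<otimes>\<^bsub>G\<^esub> g0 \<otimes>\<^bsub>G\<^esub> \<phi> (inv\<^bsub>G\<^esub> h)" .
  have "\<exists>h\<in>carrier G. g = h \<otimes>\<^bsub>G\<^esub> g0 \<otimes>\<^bsub>G\<^esub> \<phi> (inv\<^bsub>G\<^esub> h)"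
    using calc c(2) by blast
  then show ?thesis using c unfolding twisted_conj_def by blast
qed

lemma twisted_equiv:
  assumes G: "group G" and hom: "\<phi> \<in> hom G G"
  shows "equiv (carrier G) (twisted_conj G \<phi>)"
proof -
  interpret group_hom G G \<phi> using G hom by (simp add: group_hom_def group_hom_axioms_def)
  show ?thesis
  proof (rule equivI)
    show "twisted_conj G \<phi> \<subseteq> carrier G \<times> carrier G" unfolding twisted_conj_def by auto
  next
    show "refl_on (carrier G) (twisted_conj G \<phi>)"
    proof (rule refl_onI)
      fix g assume "g \<in> carrier G"
      then show "(g, g) \<in> twisted_conj G \<phi>" unfolding twisted_conj_def
        by (auto intro!: bexI[where x="\<one>\<^bsub>G\<^esub>"])
    qed
  next
    show "sym (twisted_conj G \<phi>)"
    proof (rule symI)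
      fix a b assume "(a, b) \<in> twisted_conj G \<phi>"
      then obtain h where c: "a \<in> carrier G" "b \<in> carrier G" "h \<in> carrier G"
        and e: "a = h \<otimes>\<^bsub>G\<^esub> b \<otimes>\<^bsub>G\<^esub> \<phi> (inv\<^bsub>G\<^esub> h)"
        unfolding twisted_conj_def by auto
      have "b = inv\<^bsub>G\<^esub> h \<otimes>\<^bsub>G\<^esub> a \<otimes>\<^bsub>G\<^esub> \<phi> (inv\<^bsub>G\<^esub> (inv\<^bsub>G\<^esub> h))"
        using c by (simp add: e G.m_assoc G.inv_solve_left G.inv_solve_right)
      then show "(b, a) \<in> twisted_conj G \<phi>" using c unfolding twisted_conj_def by blast
    qed
  next
    show "trans (twisted_conj G \<phi>)"
    proof (rule transI)
      fix a b x assume "(a, b) \<in> twisted_conj G \<phi>" "(b, x) \<in> twisted_conj G \<phi>"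
      then obtain h k where c: "a \<in> carrier G" "b \<in> carrier G" "x \<in> carrier G" "h \<in> carrier G" "k \<in> carrier G"
        and e: "a = h \<otimes>\<^bsub>G\<^esub> b \<otimes>\<^bsub>G\<^esub> \<phi> (inv\<^bsub>G\<^esub> h)"
        and e2: "b = k \<otimes>\<^bsub>G\<^esub> x \<otimes>\<^bsub>G\<^esub> \<phi> (inv\<^bsub>G\<^esub> k)"
        unfolding twisted_conj_def by auto
      have "a = (h \<otimes>\<^bsub>G\<^esub> k) \<otimes>\<^bsub>G\<^esub> x \<otimes>\<^bsub>G\<^esub> \<phi> (inv\<^bsub>G\<^esub> (h \<otimes>\<^bsub>G\<^esub> k))"
        using c by (simp add: e e2 G.m_assoc G.inv_mult_group)
      then show "(a, x) \<in> twisted_conj G \<phi>" using c unfolding twisted_conj_def by blast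
    qed
  qed
qed


lemma odd_prodpow: fixes N :: nat shows "(\<forall>i<N. odd (p i :: nat)) \<Longrightarrow> odd (\<Prod>i<N. p i ^ s i)"
  by (induction N) auto

theorem proposition4p6:
  fixes N k :: nat and p s :: "nat \<Rightarrow> nat"
  assumes "N > 0" and "k > 0"
    and "\<forall>i<N. Factorial_Ring.prime (p i) \<and> p i > 2"
    and "\<forall>i<N. s i > 0"
  shows "\<exists>\<phi>. \<phi> \<in> iso (wreath (\<Prod>i<N. p i ^ s i) (2 * k)) (wreath (\<Prod>i<N. p i ^ s i) (2 * k))
           \<and> finite (reidemeister_classes (wreath (\<Prod>i<N. p i ^ s i) (2 * k)) \<phi>)"
proof -
  define q where "q = (\<Prod>i<N. p i ^ s i)"
  define d where "d = 2 * k"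
  have oq: "odd q" unfolding q_def using assms(3) prime_odd_nat by (intro odd_prodpow) blast
  then have q: "q > 0" by (cases q) auto
  have d: "even d" unfolding d_def by simp
  let ?G = "wreath q d"
  let ?r = "twisted_conj ?G (phi q)"
  have G: "group ?G" by (rule wreath_group[OF q])
  have hom: "phi q \<in> hom ?G ?G" by (rule phi_hom[OF q d])
  have eqv: "equiv (carrier ?G) ?r" by (rule twisted_equiv[OF G hom])
  define V0 where "V0 = {u :: nat \<Rightarrow> int. \<forall>x. (x \<in> {..<d} \<longrightarrow> u x \<in> {0..2}) \<and> (x \<notin> {..<d} \<longrightarrow> u x = 0)}"
  have finV0: "finite V0" unfolding V0_def by (rule finite_set_of_finite_funs) auto
  define R where "R = twisted_conj ?G (phi q)"
  define cls where "cls u = R `` {((\<lambda>x. 0 :: int), u)}" for u :: "nat \<Rightarrow> int"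
  have sub: "carrier ?G // R \<subseteq> cls ` V0"
  proof
    fix Y assume "Y \<in> carrier ?G // R"
    then obtain g where Y: "Y = R `` {g}" and g: "g \<in> carrier ?G" by (rule quotientE)
    obtain h u where h: "h \<in> carrier ?G" and u: "u \<in> V0"
      and e: "g \<otimes>\<^bsub>wreath q d\<^esub> phi q h = h \<otimes>\<^bsub>wreath q d\<^esub> ((\<lambda>x. 0), u)"
      using key[OF q oq d g] unfolding V0_def by blast
    have "u \<in> Zvec d" using u unfolding V0_def Zvec_def by auto
    then have g0: "((\<lambda>x. 0), u) \<in> carrier ?G"
      using q by (auto simp: wreath_carrier lamps_def)
    have "(g, ((\<lambda>x. 0), u)) \<in> R" unfolding R_def by (rule twist_of[OF G hom g h g0 e])
    then have "Y = cls u" unfolding Y cls_def using equiv_class_eq[OF eqv] R_def by blast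
    then show "Y \<in> cls ` V0" using u by blast
  qed
  have "finite (reidemeister_classes ?G (phi q))"
    unfolding reidemeister_classes_def R_def[symmetric] using sub finV0 by (meson finite_imageI finite_subset)
  then show ?thesis using phi_iso[OF q d] unfolding q_def d_def by blast
qed

end
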